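(* Consider the model described in the context and the quantities $R_0$ and $R_1$ defined there. 1. If $R_0\le 1$, then $E_0=(\bar x,0,0,0)$ is the unique equilibrium of the system. 2. If $R_1\le 1<R_0$, then, in addition to $E_0$, the system has a CTL-inactivated infection equilibrium $E_1=(x_1,y_1,v_1,0)$ with $x_1,y_1,v_1>0$. 3. If $R_0>R_1>1$, then, in addition to $E_0$ and $E_1$, the system has a CTL-activated infection equilibrium $E_2=(x_2,y_2,v_2,z_2)$ with all entries strictly positive.
   Context: The model is $$\dot x(t)=n(x(t))-f(x(t),y(t),v(t))v(t),$$ $$\dot y(t)=\int_0^\infty f_1(\tau)f(x(t-\tau),y(t-\tau),v(t-\tau))v(t-\tau)e^{-\alpha_1\tau}\,d\tau-a\varphi_1(y(t))-p\varphi_1(y(t))\varphi_2(z(t)),$$ $$\dot v(t)=k\int_0^\infty f_2(\tau)e^{-\alpha_2\tau}\varphi_1(y(t-\tau))\,d\tau-uv(t),$$ $$\dot z(t)=c\int_0^\infty f_3(\tau)\varphi_1(y(t-\tau))\varphi_2(z(t-\tau))\,d\tau-b\varphi_2(z(t)).$$ Here $a,p,k,u,c,b>0$ and $\alpha_1,\alpha_2\ge0$ are constants. Assumptions on $f$: $f$ is continuously differentiable in the interior of $\mathbb{R}^3_+$, and (i) $f(0,y,v)=0$ for all $y,v\ge0$; (ii) $\partial f/\partial x>0$ for $x,y,v>0$; (iii) $\partial f/\partial y\le0$ and $\partial f/\partial v\le0$ for $x,y,v\ge0$. Assumption on $n$: $n$ is $C^1$, and there is $\bar x>0$ with $n(\bar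 x)=0$, $n>0$ on $[0,\bar x)$, and $n(x)<0$ for $x>\bar x$. Assumptions on $\varphi_1,\varphi_2$: each $\varphi_i$ is strictly increasing on $[0,\infty)$, with $\varphi_i(0)=0$, $\varphi_i'(0)=1$, $\varphi_i(s)\to\infty$ as $s\to\infty$, and $\varphi_i(s)\ge k_is$ for some $k_i>0$. Assumptions on the kernels: $f_i\ge0$; $\int_0^\infty f_1=\int_0^\infty f_2=1$; $\int_0^\infty f_3\le1$ and $\int_0^\infty f_3(\tau)e^{s\tau}\,d\tau<\infty$ for some $s>0$. Notation: $G_1=\int_0^\infty f_1(\tau)e^{-\alpha_1\tau}\,d\tau$, $G_2=\int_0^\infty f_2(\tau)e^{-\alpha_2\tau}\,d\tau$, $G_3=\int_0^\infty f_3(\tau)\,d\tau$. An equilibrium is a constant solution, i.e. a point in $\mathbb{R}^4_+$ satisfying $$n(x)=f(x,y,v)v,\qquad f(x,y,v)v=\tfrac{1}{G_1}\bigl(a\varphi_1(y)+p\varphi_1(y)\varphi_2(z)\bigr),$$ $$kG_2\varphi_1(y)=uv,\qquad cG_3\varphi_1(y)\varphi_2(z)=b\varphi_2(z).$$ Reproduction numbers: set $R(x,y,v)=\dfrac{kG_1G_2f(x,y,v)}{au}$ and $R_0=R(\bar x,0,0)$. Let $\hat y=\varphi_1^{-1}\bigl(b/(cG_3)\bigr)$ and $\hat v=kG_2\varphi_1(\hat y)/u$. Let $\hat x\in(0,\bar x)$ be a root of $n(x)-f(x,\hat y,\hat v)\hat v=0$, which exists. Then $R_1=R(\hat x,\hat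 y,\hat v)$. *)

theory Defs
  imports "HOL-Analysis.Analysis"
begin

text \<open>Equilibrium of the delayed CTL model: a point of the closed nonnegative
orthant satisfying the four steady-state equations (with the delay integrals
G1, G2, G3 already evaluated).\<close>
definition equilibrium ::
  "(real \<Rightarrow> real) \<Rightarrow> (real \<Rightarrow> real \<Rightarrow> real \<Rightarrow> real) \<Rightarrow> (real \<Rightarrow> real) \<Rightarrow> (real \<Rightarrow> real)
   \<Rightarrow> real \<Rightarrow> real \<Rightarrow> real \<Rightarrow> real \<Rightarrow> real \<Rightarrow> real \<Rightarrow> real \<Rightarrow> real \<Rightarrow> real
   \<Rightarrow> real \<Rightarrow> real \<Rightarrow> real \<Rightarrow> real \<Rightarrow> bool" where
  "equilibrium n f \<phi>1 \<phi>2 a p k u c b G1 G2 G3 x y v z \<longleftrightarrow>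
     x \<ge> 0 \<and> y \<ge> 0 \<and> v \<ge> 0 \<and> z \<ge> 0 \<and>
     n x = f x y v * v \<and>
     f x y v * v = (a * \<phi>1 y + p * \<phi>1 y * \<phi>2 z) / G1 \<and>
     k * G2 * \<phi>1 y = u * v \<and>
     c * G3 * \<phi>1 y * \<phi>2 z = b * \<phi>2 z"

definition Rnum ::
  "(real \<Rightarrow> real \<Rightarrow> real \<Rightarrow> real) \<Rightarrow> real \<Rightarrow> real \<Rightarrow> real \<Rightarrow> real \<Rightarrow> real
   \<Rightarrow> real \<Rightarrow> real \<Rightarrow> real \<Rightarrow> real" where
  "Rnum f k a u G1 G2 x y v = k * G1 * G2 * f x y v / (a * u)"

end

theory Submission
  imports Defs
begin


lemma pd:
  fixes f :: "real \<Rightarrow> real \<Rightarrow> real \<Rightarrow> real"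
  assumes hd: "((\<lambda>(x', y', v'). f x' y' v') has_derivative (\<lambda>(h1,h2,h3). A*h1 + B*h2 + C*h3)) (at (x,y,v))"
  shows "((\<lambda>t. f t y v) has_real_derivative A) (at x)"
    "((\<lambda>t. f x t v) has_real_derivative B) (at y)"
    "((\<lambda>t. f x y t) has_real_derivative C) (at v)"
proof -
  have "((\<lambda>t. (t,y,v)) has_derivative (\<lambda>h. (h,0,0))) (at x)"
    by (auto intro!: derivative_eq_intros simp: zero_prod_def)
  from has_derivative_compose[OF this hd]
  have "((\<lambda>t. f t y v) has_derivative (\<lambda>h. A*h)) (at x)" by simp
  then show "((\<lambda>t. f t y v) has_real_derivative A) (at x)"
    by (simp add: has_field_derivative_def mult.commute[of _ A] mult.commute[of _ B] mult.commute[of _ C])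
  have "((\<lambda>t. (x,t,v)) has_derivative (\<lambda>h. (0,h,0))) (at y)"
    by (auto intro!: derivative_eq_intros simp: zero_prod_def)
  from has_derivative_compose[OF this hd]
  have "((\<lambda>t. f x t v) has_derivative (\<lambda>h. B*h)) (at y)" by simp
  then show "((\<lambda>t. f x t v) has_real_derivative B) (at y)"
    by (simp add: has_field_derivative_def mult.commute[of _ A] mult.commute[of _ B] mult.commute[of _ C])
  have "((\<lambda>t. (x,y,t)) has_derivative (\<lambda>h. (0,0,h))) (at v)"
    by (auto intro!: derivative_eq_intros simp: zero_prod_def)
  from has_derivative_compose[OF this hd]
  have "((\<lambda>t. f x y t) has_derivative (\<lambda>h. C*h)) (at v)" by simp
  then show "((\<lambda>t. f x y t) has_real_derivative C) (at v)"
    by (simp add: has_field_derivative_def mult.commute[of _ A] mult.commute[of _ B] mult.commute[of _ C])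
qed

lemma phi_surj:
  fixes \<phi> :: "real \<Rightarrow> real"
  assumes "continuous_on {0..} \<phi>" "\<phi> 0 = 0" "filterlim \<phi> at_top at_top" "t \<ge> 0"
  shows "\<exists>s\<ge>0. \<phi> s = t"
proof -
  from assms(3) have "eventually (\<lambda>x. \<phi> x \<ge> t) at_top"
    by (simp add: filterlim_at_top)
  then obtain N where N: "\<And>x. x \<ge> N \<Longrightarrow> \<phi> x \<ge> t" by (auto simp: eventually_at_top_linorder)
  define M where "M = max N 0"
  have "\<phi> M \<ge> t" using N M_def by simp
  moreover have "continuous_on {0..M} \<phi>" using assms(1) by (rule continuous_on_subset) auto
  ultimately obtain s where "0 \<le> s" "s \<le> M" "\<phi> s = t"
    using IVT'[of \<phi> 0 t M] assms M_def by auto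
  then show ?thesis by auto
qed



lemma G_pos:
  fixes g :: "real \<Rightarrow> real"
  assumes gi: "set_integrable lborel {0..} g" and g1: "(LINT \<tau>:{0..}|lborel. g \<tau>) = 1"
    and gn: "\<And>\<tau>. \<tau> \<ge> 0 \<Longrightarrow> g \<tau> \<ge> 0" and \<alpha>: "\<alpha> \<ge> 0"
  shows "(LINT \<tau>:{0..}|lborel. g \<tau> * exp (- \<alpha> * \<tau>)) > 0"
proof -
  let ?h = "\<lambda>\<tau>. indicator {0..} \<tau> * g \<tau> :: real"
  let ?k = "\<lambda>\<tau>. indicator {0..} \<tau> * (g \<tau> * exp (- \<alpha> * \<tau>)) :: real"
  have hi: "integrable lborel ?h" using gi by (simp add: set_integrable_def)
  have hm: "?h \<in> borel_measurable lborel" using hi by auto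
  have km: "?k \<in> borel_measurable lborel"
  proof -
    have "(\<lambda>\<tau>. ?h \<tau> * exp (- \<alpha> * \<tau>)) \<in> borel_measurable lborel"
      using hm by measurable
    moreover have "(\<lambda>\<tau>. ?h \<tau> * exp (- \<alpha> * \<tau>)) = ?k" by (auto simp: fun_eq_iff)
    ultimately show ?thesis by simp
  qed
  have ki: "integrable lborel ?k"
  proof (rule Bochner_Integration.integrable_bound[OF hi km])
    show "AE x in lborel. norm (?k x) \<le> norm (?h x)"
    proof (rule AE_I2)
      fix x :: real
      show "norm (?k x) \<le> norm (?h x)"
      proof (cases "x \<ge> 0")
        case True
        have "exp (- \<alpha> * x) \<le> 1" using True \<alpha> by (simp add: mult_nonneg_nonneg)
        then show ?thesis using True gn[OF True] by (simp add: abs_mult mult_left_le)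
      qed simp
    qed
  qed
  have kn: "AE x in lborel. 0 \<le> ?k x" using gn by (auto simp: indicator_def)
  have "integral\<^sup>L lborel ?k \<noteq> 0"
  proof
    assume "integral\<^sup>L lborel ?k = 0"
    then have "AE x in lborel. ?k x = 0" using integral_nonneg_eq_0_iff_AE[OF ki kn] by simp
    then have "AE x in lborel. ?h x = 0" by (rule AE_mp) (auto intro!: AE_I2)
    then have "integral\<^sup>L lborel ?h = 0" by (simp add: integral_eq_zero_AE)
    then show False using g1 by (simp add: set_lebesgue_integral_def)
  qed
  moreover have "integral\<^sup>L lborel ?k \<ge> 0" using kn by (simp add: integral_nonneg_AE)
  ultimately show ?thesis by (simp add: set_lebesgue_integral_def)
qed



locale fl =
  fixes f fx fy fv :: "real \<Rightarrow> real \<Rightarrow> real \<Rightarrow> real"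
  assumes FD: "\<forall>x y v. x > 0 \<and> y > 0 \<and> v > 0 \<longrightarrow>
          ((\<lambda>(x', y', v'). f x' y' v') has_derivative
             (\<lambda>(h1, h2, h3). fx x y v * h1 + fy x y v * h2 + fv x y v * h3)) (at (x, y, v))"
  and FS: "\<forall>x y v. x > 0 \<and> y > 0 \<and> v > 0 \<longrightarrow>
          fx x y v > 0 \<and> fy x y v \<le> 0 \<and> fv x y v \<le> 0"
  and FC: "continuous_on {(x, y, v). x \<ge> 0 \<and> y \<ge> 0 \<and> v \<ge> 0} (\<lambda>(x, y, v). f x y v)"
begin

lemma incx: assumes "0 < x" "x < x'" "y > 0" "v > 0" shows "f x y v < f x' y v"
proof -
  have "(\<lambda>t. f t y v) x < (\<lambda>t. f t y v) x'"
  proof (rule DERIV_pos_imp_increasing[OF assms(2)])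
    fix t assume "x \<le> t" "t \<le> x'"
    then have "t > 0" using assms by simp
    then show "\<exists>d. ((\<lambda>t. f t y v) has_real_derivative d) (at t) \<and> d > 0"
      using pd(1)[OF FD[rule_format, of t y v]] FS assms by auto
  qed
  then show ?thesis by simp
qed

lemma decy: assumes "0 < x" "0 < y" "y \<le> y'" "v > 0" shows "f x y' v \<le> f x y v"
proof -
  have "(\<lambda>t. f x t v) y' \<le> (\<lambda>t. f x t v) y"
  proof (rule DERIV_nonpos_imp_nonincreasing[OF assms(3)])
    fix t assume "y \<le> t" "t \<le> y'"
    then have "t > 0" using assms by simp
    then show "\<exists>d. ((\<lambda>t. f x t v) has_real_derivative d) (at t) \<and> d \<le> 0"
      using pd(2)[OF FD[rule_format, of x t v]] FS assms by auto
  qed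
  then show ?thesis by simp
qed

lemma decv: assumes "0 < x" "0 < y" "0 < v" "v \<le> v'" shows "f x y v' \<le> f x y v"
proof -
  have "(\<lambda>t. f x y t) v' \<le> (\<lambda>t. f x y t) v"
  proof (rule DERIV_nonpos_imp_nonincreasing[OF assms(4)])
    fix t assume "v \<le> t" "t \<le> v'"
    then have "t > 0" using assms by simp
    then show "\<exists>d. ((\<lambda>t. f x y t) has_real_derivative d) (at t) \<and> d \<le> 0"
      using pd(3)[OF FD[rule_format, of x y t]] FS assms by auto
  qed
  then show ?thesis by simp
qed

lemma le00: assumes "0 < x" "0 < y" "0 < v" shows "f x y v \<le> f x 0 0"
proof -
  define e0 where "e0 = min y v"
  have e0: "e0 > 0" using assms e0_def by simp
  have "continuous_on {0..e0} (\<lambda>e. (\<lambda>(x, y, v). f x y v) (x, e, e))"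
    by (rule continuous_on_compose2[OF FC]) (auto intro!: continuous_intros simp: assms less_imp_le)
  then have c: "continuous_on {0..e0} (\<lambda>e. f x e e)" by simp
  have lim: "((\<lambda>e. f x e e) \<longlongrightarrow> f x 0 0) (at_right 0)"
    using continuous_on_Icc_at_rightD[OF c e0] by simp
  have ev: "eventually (\<lambda>e. f x y v \<le> f x e e) (at_right 0)"
    unfolding eventually_at_right[OF e0]
  proof (intro exI[of _ e0] conjI allI impI)
    fix e :: real assume "0 < e" "e < e0"
    then have "f x y v \<le> f x e v" using decy[of x e y v] assms e0_def by simp
    also have "\<dots> \<le> f x e e" using decv[of x e e v] assms e0_def \<open>0 < e\<close> \<open>e < e0\<close> by simp
    finally show "f x y v \<le> f x e e" .
  qed (rule e0)
  show ?thesis by (rule tendsto_lowerbound[OF lim ev]) simp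
qed

end

theorem theorem2:
  fixes n :: "real \<Rightarrow> real" and f :: "real \<Rightarrow> real \<Rightarrow> real \<Rightarrow> real"
    and \<phi>1 \<phi>2 :: "real \<Rightarrow> real" and f1 f2 f3 :: "real \<Rightarrow> real"
    and a p k u c b \<alpha>1 \<alpha>2 xbar :: real
  defines "G1 \<equiv> (LINT \<tau>:{0..}|lborel. f1 \<tau> * exp (- \<alpha>1 * \<tau>))"
    and "G2 \<equiv> (LINT \<tau>:{0..}|lborel. f2 \<tau> * exp (- \<alpha>2 * \<tau>))"
    and "G3 \<equiv> (LINT \<tau>:{0..}|lborel. f3 \<tau>)"
  assumes params: "a > 0" "p > 0" "k > 0" "u > 0" "c > 0" "b > 0" "\<alpha>1 \<ge> 0" "\<alpha>2 \<ge> 0"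
    (* f: continuous on the closed orthant, C^1 in its interior *)
    and f_cont: "continuous_on {(x, y, v). x \<ge> 0 \<and> y \<ge> 0 \<and> v \<ge> 0} (\<lambda>(x, y, v). f x y v)"
    and f_C1: "\<exists>fx fy fv :: real \<Rightarrow> real \<Rightarrow> real \<Rightarrow> real.
       continuous_on {(x, y, v). x > 0 \<and> y > 0 \<and> v > 0} (\<lambda>(x, y, v). fx x y v) \<and>
       continuous_on {(x, y, v). x > 0 \<and> y > 0 \<and> v > 0} (\<lambda>(x, y, v). fy x y v) \<and>
       continuous_on {(x, y, v). x > 0 \<and> y > 0 \<and> v > 0} (\<lambda>(x, y, v). fv x y v) \<and>
       (\<forall>x y v. x > 0 \<and> y > 0 \<and> v > 0 \<longrightarrow>
          ((\<lambda>(x', y', v'). f x' y' v') has_derivative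
             (\<lambda>(h1, h2, h3). fx x y v * h1 + fy x y v * h2 + fv x y v * h3)) (at (x, y, v))) \<and>
       (\<forall>x y v. x > 0 \<and> y > 0 \<and> v > 0 \<longrightarrow>
          fx x y v > 0 \<and> fy x y v \<le> 0 \<and> fv x y v \<le> 0)"
    and f_zero: "\<And>y v. y \<ge> 0 \<Longrightarrow> v \<ge> 0 \<Longrightarrow> f 0 y v = 0"
    (* n *)
    and n_C1: "\<exists>n'. continuous_on {0..} n' \<and> (\<forall>x\<ge>0. (n has_real_derivative n' x) (at x within {0..}))"
    and xbar: "xbar > 0" "n xbar = 0" "\<And>x. 0 \<le> x \<Longrightarrow> x < xbar \<Longrightarrow> n x > 0"
      "\<And>x. x > xbar \<Longrightarrow> n x < 0"
    (* phi_1, phi_2 *)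
    and \<phi>: "\<And>\<phi>. \<phi> \<in> {\<phi>1, \<phi>2} \<Longrightarrow> strict_mono_on {0..} \<phi> \<and> continuous_on {0..} \<phi> \<and> \<phi> 0 = 0 \<and>
        (\<phi> has_real_derivative 1) (at 0 within {0..}) \<and> filterlim \<phi> at_top at_top \<and>
        (\<exists>ki>0. \<forall>s\<ge>0. \<phi> s \<ge> ki * s)"
    (* kernels *)
    and kernels_nonneg: "\<And>\<tau>. \<tau> \<ge> 0 \<Longrightarrow> f1 \<tau> \<ge> 0 \<and> f2 \<tau> \<ge> 0 \<and> f3 \<tau> \<ge> 0"
    and f1_int: "set_integrable lborel {0..} f1" "(LINT \<tau>:{0..}|lborel. f1 \<tau>) = 1"
    and f2_int: "set_integrable lborel {0..} f2" "(LINT \<tau>:{0..}|lborel. f2 \<tau>) = 1"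
    and f3_int: "set_integrable lborel {0..} f3" "G3 \<le> 1"
      "\<exists>s>0. set_integrable lborel {0..} (\<lambda>\<tau>. f3 \<tau> * exp (s * \<tau>))"
    and G3_pos: "G3 > 0"
  shows
    "(Rnum f k a u G1 G2 xbar 0 0 \<le> 1 \<longrightarrow>
        (\<forall>x y v z. equilibrium n f \<phi>1 \<phi>2 a p k u c b G1 G2 G3 x y v z \<longleftrightarrow>
                   (x, y, v, z) = (xbar, 0, 0, 0))) \<and>
     (\<forall>xhat. let yhat = the_inv_into {0..} \<phi>1 (b / (c * G3));
                 vhat = k * G2 * \<phi>1 yhat / u;
                 R0 = Rnum f k a u G1 G2 xbar 0 0;
                 R1 = Rnum f k a u G1 G2 xhat yhat vhat
             in (0 < xhat \<and> xhat < xbar \<and> n xhat - f xhat yhat vhat * vhat = 0) \<longrightarrow>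
       ((R1 \<le> 1 \<and> 1 < R0 \<longrightarrow>
           equilibrium n f \<phi>1 \<phi>2 a p k u c b G1 G2 G3 xbar 0 0 0 \<and>
           (\<exists>x1 y1 v1. x1 > 0 \<and> y1 > 0 \<and> v1 > 0 \<and>
              equilibrium n f \<phi>1 \<phi>2 a p k u c b G1 G2 G3 x1 y1 v1 0)) \<and>
        (R0 > R1 \<and> R1 > 1 \<longrightarrow>
           equilibrium n f \<phi>1 \<phi>2 a p k u c b G1 G2 G3 xbar 0 0 0 \<and>
           (\<exists>x1 y1 v1. x1 > 0 \<and> y1 > 0 \<and> v1 > 0 \<and>
              equilibrium n f \<phi>1 \<phi>2 a p k u c b G1 G2 G3 x1 y1 v1 0) \<and>
           (\<exists>x2 y2 v2 z2. x2 > 0 \<and> y2 > 0 \<and> v2 > 0 \<and> z2 > 0 \<and>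
              equilibrium n f \<phi>1 \<phi>2 a p k u c b G1 G2 G3 x2 y2 v2 z2))))"
proof -
  from f_C1 obtain fx fy fv :: "real \<Rightarrow> real \<Rightarrow> real \<Rightarrow> real" where
    FD: "\<forall>x y v. x > 0 \<and> y > 0 \<and> v > 0 \<longrightarrow>
          ((\<lambda>(x', y', v'). f x' y' v') has_derivative
             (\<lambda>(h1, h2, h3). fx x y v * h1 + fy x y v * h2 + fv x y v * h3)) (at (x, y, v))"
    and FS: "\<forall>x y v. x > 0 \<and> y > 0 \<and> v > 0 \<longrightarrow>
          fx x y v > 0 \<and> fy x y v \<le> 0 \<and> fv x y v \<le> 0"
    by blast
  interpret F: fl f fx fy fv using FD FS f_cont by unfold_locales
  have G1p: "G1 > 0" unfolding G1_def
    by (rule G_pos[OF f1_int]) (use kernels_nonneg params in auto)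
  have G2p: "G2 > 0" unfolding G2_def
    by (rule G_pos[OF f2_int]) (use kernels_nonneg params in auto)
  have p1: "strict_mono_on {0..} \<phi>1" "continuous_on {0..} \<phi>1" "\<phi>1 0 = 0" "filterlim \<phi>1 at_top at_top"
    using \<phi>[of \<phi>1] by auto
  have p2: "strict_mono_on {0..} \<phi>2" "continuous_on {0..} \<phi>2" "\<phi>2 0 = 0" "filterlim \<phi>2 at_top at_top"
    using \<phi>[of \<phi>2] by auto
  have p1pos: "\<phi>1 s > 0" if "s > 0" for s
    using strict_mono_onD[OF p1(1), of 0 s] that p1(3) by auto
  have p2pos: "\<phi>2 s > 0" if "s > 0" for s
    using strict_mono_onD[OF p2(1), of 0 s] that p2(3) by auto
  have p2nn: "\<phi>2 s \<ge> 0" if "s \<ge> 0" for s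
    using p2pos[of s] that p2(3) by (cases "s = 0") auto
  note pa = params
  define \<theta> where "\<theta> = a * u / (k * G1 * G2)"
  have \<theta>p: "\<theta> > 0" using pa G1p G2p by (simp add: \<theta>_def)
  have Rgt: "Rnum f k a u G1 G2 x y v > 1 \<longleftrightarrow> f x y v > \<theta>" for x y v
    using pa G1p G2p by (simp add: Rnum_def \<theta>_def field_simps)
  have Rle: "Rnum f k a u G1 G2 x y v \<le> 1 \<longleftrightarrow> f x y v \<le> \<theta>" for x y v
    using Rgt[of x y v] by linarith
  have E0: "equilibrium n f \<phi>1 \<phi>2 a p k u c b G1 G2 G3 xbar 0 0 0"
    using xbar p1(3) p2(3) by (simp add: equilibrium_def)
  have nx0: "x = xbar" if "n x = 0" "x \<ge> 0" for x
  proof -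
    have "\<not> x < xbar" using xbar(3)[of x] that by auto
    moreover have "\<not> x > xbar" using xbar(4)[of x] that by auto
    ultimately show ?thesis by simp
  qed
  have part1: "\<forall>x y v z. equilibrium n f \<phi>1 \<phi>2 a p k u c b G1 G2 G3 x y v z \<longleftrightarrow>
                   (x, y, v, z) = (xbar, 0, 0, 0)" if R0: "f xbar 0 0 \<le> \<theta>"
  proof (intro allI iffI)
    fix x y v z :: real
    assume "(x, y, v, z) = (xbar, 0, 0, 0)"
    then show "equilibrium n f \<phi>1 \<phi>2 a p k u c b G1 G2 G3 x y v z" using E0 by simp
  next
    fix x y v z :: real
    assume eq: "equilibrium n f \<phi>1 \<phi>2 a p k u c b G1 G2 G3 x y v z"
    then have nn: "x \<ge> 0" "y \<ge> 0" "v \<ge> 0" "z \<ge> 0"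
      and e1: "n x = f x y v * v"
      and e2: "f x y v * v = (a * \<phi>1 y + p * \<phi>1 y * \<phi>2 z) / G1"
      and e3: "k * G2 * \<phi>1 y = u * v"
      and e4: "c * G3 * \<phi>1 y * \<phi>2 z = b * \<phi>2 z"
      by (auto simp: equilibrium_def)
    show "(x, y, v, z) = (xbar, 0, 0, 0)"
    proof (cases "y = 0")
      case True
      then have "v = 0" using e3 p1(3) pa by simp
      then have "x = xbar" using e1 nx0 nn by simp
      have "\<phi>2 z = 0" using e4 True p1(3) pa by simp
      then have "z = 0" using p2pos[of z] nn by (cases "z = 0") auto
      then show ?thesis using True \<open>v = 0\<close> \<open>x = xbar\<close> by simp
    next
      case False
      then have yp: "y > 0" using nn by simp
      have py: "\<phi>1 y > 0" using p1pos[OF yp] .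
      have vv: "v = k * G2 * \<phi>1 y / u" using e3 pa by (simp add: field_simps)
      have vp: "v > 0" using vv py pa G2p by simp
      have "f x y v * v \<ge> a * \<phi>1 y / G1"
      proof -
        have "p * \<phi>1 y * \<phi>2 z \<ge> 0" using pa py p2nn[OF nn(4)] by simp
        then show ?thesis using e2 G1p by (simp add: divide_right_mono)
      qed
      moreover have "a * \<phi>1 y / G1 = \<theta> * v"
        using vv pa G1p G2p by (simp add: \<theta>_def field_simps)
      ultimately have "f x y v * v \<ge> \<theta> * v" by simp
      then have fge: "f x y v \<ge> \<theta>" using vp by simp
      have "n x > 0" using e1 fge \<theta>p vp by simp
      then have xlt: "x < xbar" using xbar(2) xbar(4)[of x] by (cases "x < xbar"; cases "x = xbar") auto
      have "x \<noteq> 0" using fge f_zero[of y v] nn \<theta>p by auto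
      then have xp: "x > 0" using nn by simp
      have "f x y v < f xbar y v" by (rule F.incx[OF xp xlt yp vp])
      also have "\<dots> \<le> f xbar 0 0" by (rule F.le00[OF xbar(1) yp vp])
      finally show ?thesis using fge R0 by simp
    qed
  qed
  have E1: "\<exists>x1 y1 v1. x1 > 0 \<and> y1 > 0 \<and> v1 > 0 \<and>
              equilibrium n f \<phi>1 \<phi>2 a p k u c b G1 G2 G3 x1 y1 v1 0" if R0: "f xbar 0 0 > \<theta>"
  proof -
    define \<psi> where "\<psi> = the_inv_into {0..} \<phi>1"
    have inj1: "inj_on \<phi>1 {0..}" by (rule strict_mono_on_imp_inj_on[OF p1(1)])
    have \<psi>\<phi>: "\<psi> (\<phi>1 s) = s" if "s \<ge> 0" for s
      unfolding \<psi>_def using the_inv_into_f_f[OF inj1] that by simp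
    from n_C1 obtain n' where "\<forall>x\<ge>0. (n has_real_derivative n' x) (at x within {0..})" by blast
    then have ncont: "continuous_on {0..} n"
      unfolding continuous_on_eq_continuous_within using DERIV_continuous by blast
    have ncont': "continuous_on {0..xbar} n" by (rule continuous_on_subset[OF ncont]) auto
    obtain xm where xm: "xm \<in> {0..xbar}" "\<forall>y\<in>{0..xbar}. n y \<le> n xm"
      using continuous_attains_sup[OF compact_Icc _ ncont'] xbar(1) by auto
    define B where "B = n xm"
    have nnn: "n x \<ge> 0" if "x \<in> {0..xbar}" for x
      using xbar(2) xbar(3)[of x] that by (cases "x = xbar") auto
    have B: "B \<ge> 0" "\<And>x. x \<in> {0..xbar} \<Longrightarrow> n x \<le> B" using xm nnn B_def by auto
    define c0 where "c0 = u / (\<theta> * k * G2)"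
    have c0p: "c0 > 0" using pa \<theta>p G2p by (simp add: c0_def)
    define T where "T = c0 * B"
    have T: "T \<ge> 0" using c0p B by (simp add: T_def)
    obtain M where M: "M \<ge> 0" "\<phi>1 M = T" using phi_surj[OF p1(2,3,4) T] by auto
    have inv: "\<exists>s\<in>{0..M}. \<phi>1 s = t" if "t \<in> {0..T}" for t
    proof -
      have "continuous_on {0..M} \<phi>1" by (rule continuous_on_subset[OF p1(2)]) auto
      then show ?thesis using IVT'[of \<phi>1 0 t M] that M p1(3) by auto
    qed
    have \<psi>T: "\<psi> t \<ge> 0 \<and> \<phi>1 (\<psi> t) = t" if "t \<in> {0..T}" for t
      using inv[OF that] \<psi>\<phi> by auto
    have "continuous_on (\<phi>1 ` {0..M}) \<psi>"
      by (rule continuous_on_inv) (use p1(2) \<psi>\<phi> in \<open>auto intro: continuous_on_subset\<close>)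
    moreover have "{0..T} \<subseteq> \<phi>1 ` {0..M}"
    proof
      fix t assume "t \<in> {0..T}"
      then obtain s where "s \<in> {0..M}" "\<phi>1 s = t" using inv by blast
      then show "t \<in> \<phi>1 ` {0..M}" by blast
    qed
    ultimately have \<psi>c: "continuous_on {0..T} \<psi>" by (rule continuous_on_subset)
    have wT: "c0 * n x \<in> {0..T}" if "x \<in> {0..xbar}" for x
      using nnn[OF that] B(2)[OF that] c0p by (simp add: T_def mult_left_mono)
    define h where "h x = f x (\<psi> (c0 * n x)) (n x / \<theta>)" for x
    have cw: "continuous_on {0..xbar} (\<lambda>x. \<psi> (c0 * n x))"
      by (rule continuous_on_compose2[OF \<psi>c]) (use wT ncont' in \<open>auto intro!: continuous_intros\<close>)
    have "continuous_on {0..xbar} (\<lambda>x. (\<lambda>(x, y, v). f x y v) (x, \<psi> (c0 * n x), n x / \<theta>))"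
    proof (rule continuous_on_compose2[OF f_cont])
      show "continuous_on {0..xbar} (\<lambda>x. (x, \<psi> (c0 * n x), n x / \<theta>))"
        using cw ncont' \<theta>p by (auto intro!: continuous_intros)
      show "(\<lambda>x. (x, \<psi> (c0 * n x), n x / \<theta>)) ` {0..xbar} \<subseteq> {(x, y, v). 0 \<le> x \<and> 0 \<le> y \<and> 0 \<le> v}"
        using \<psi>T[OF wT] nnn \<theta>p by auto
    qed
    then have hc: "continuous_on {0..xbar} h" by (simp add: h_def)
    have h0: "h 0 = 0"
    proof -
      have "\<psi> (c0 * n 0) \<ge> 0" using \<psi>T[OF wT[of 0]] xbar(1) by simp
      moreover have "n 0 / \<theta> \<ge> 0" using nnn[of 0] xbar(1) \<theta>p by simp
      ultimately show ?thesis using f_zero by (simp add: h_def)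
    qed
    have hxbar: "h xbar = f xbar 0 0" using \<psi>\<phi>[of 0] p1(3) xbar(2) by (simp add: h_def)
    obtain x1 where x1: "0 \<le> x1" "x1 \<le> xbar" "h x1 = \<theta>"
      using IVT'[of h 0 \<theta> xbar, OF _ _ _ hc] h0 hxbar R0 \<theta>p xbar(1) by auto
    have "x1 \<noteq> 0" using x1 h0 \<theta>p by auto
    have "x1 \<noteq> xbar" using x1 hxbar R0 by auto
    have x1p: "0 < x1" "x1 < xbar" using x1 \<open>x1 \<noteq> 0\<close> \<open>x1 \<noteq> xbar\<close> by auto
    have nx1: "n x1 > 0" using xbar(3) x1p by simp
    define v1 where "v1 = n x1 / \<theta>"
    define y1 where "y1 = \<psi> (c0 * n x1)"
    have v1p: "v1 > 0" using nx1 \<theta>p by (simp add: v1_def)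
    have y1: "y1 \<ge> 0" "\<phi>1 y1 = c0 * n x1" using \<psi>T[OF wT[of x1]] x1 by (auto simp: y1_def)
    have y1p: "y1 > 0" using y1 c0p nx1 p1(3) by (cases "y1 = 0") auto
    have fv: "f x1 y1 v1 = \<theta>" using x1(3) by (simp add: h_def y1_def v1_def)
    have "equilibrium n f \<phi>1 \<phi>2 a p k u c b G1 G2 G3 x1 y1 v1 0"
      unfolding equilibrium_def
    proof (intro conjI)
      show "n x1 = f x1 y1 v1 * v1" using fv \<theta>p by (simp add: v1_def)
      show "f x1 y1 v1 * v1 = (a * \<phi>1 y1 + p * \<phi>1 y1 * \<phi>2 0) / G1"
        using fv y1(2) p2(3) pa G1p G2p \<theta>p by (simp add: v1_def c0_def \<theta>_def field_simps)
      show "k * G2 * \<phi>1 y1 = u * v1"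
        using y1(2) pa G1p G2p \<theta>p by (simp add: v1_def c0_def field_simps)
      show "c * G3 * \<phi>1 y1 * \<phi>2 0 = b * \<phi>2 0" using p2(3) by simp
    qed (use x1p y1p v1p in auto)
    then show ?thesis using x1p y1p v1p by blast
  qed
  show ?thesis
  proof (intro conjI allI)
    show "Rnum f k a u G1 G2 xbar 0 0 \<le> 1 \<longrightarrow>
        (\<forall>x y v z. equilibrium n f \<phi>1 \<phi>2 a p k u c b G1 G2 G3 x y v z \<longleftrightarrow>
                   (x, y, v, z) = (xbar, 0, 0, 0))"
      using part1 Rle by blast
  next
    fix xhat
    define yhat where "yhat = the_inv_into {0..} \<phi>1 (b / (c * G3))"
    define vhat where "vhat = k * G2 * \<phi>1 yhat / u"
    have bc: "b / (c * G3) > 0" using pa G3_pos by simp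
    obtain s where s: "s \<ge> 0" "\<phi>1 s = b / (c * G3)"
      using phi_surj[OF p1(2,3,4), of "b / (c * G3)"] bc by auto
    have inj1: "inj_on \<phi>1 {0..}" by (rule strict_mono_on_imp_inj_on[OF p1(1)])
    have ys: "yhat = s" unfolding yhat_def using the_inv_into_f_f[OF inj1, of s] s by simp
    have sp: "s > 0" using s bc p1(3) by (cases "s = 0") auto
    have vhp: "vhat > 0" using vhat_def ys sp p1pos[OF sp] pa G2p by simp
    have E2: "\<exists>x2 y2 v2 z2. x2 > 0 \<and> y2 > 0 \<and> v2 > 0 \<and> z2 > 0 \<and>
              equilibrium n f \<phi>1 \<phi>2 a p k u c b G1 G2 G3 x2 y2 v2 z2"
      if xh: "0 < xhat" "n xhat - f xhat yhat vhat * vhat = 0" and R1: "f xhat yhat vhat > \<theta>"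
    proof -
      define F where "F = f xhat s vhat"
      have Fg: "F > \<theta>" using R1 ys by (simp add: F_def)
      define q where "q = a * (F / \<theta> - 1) / p"
      have qp: "q > 0" using Fg \<theta>p pa by (simp add: q_def field_simps)
      obtain z where z: "z \<ge> 0" "\<phi>2 z = q" using phi_surj[OF p2(2,3,4), of q] qp by auto
      have zp: "z > 0" using z qp p2(3) by (cases "z = 0") auto
      have "equilibrium n f \<phi>1 \<phi>2 a p k u c b G1 G2 G3 xhat s vhat z"
        unfolding equilibrium_def
      proof (intro conjI)
        show "n xhat = f xhat s vhat * vhat" using xh ys by simp
        show "f xhat s vhat * vhat = (a * \<phi>1 s + p * \<phi>1 s * \<phi>2 z) / G1"
        proof -
          have vh: "vhat = k * G2 * \<phi>1 s / u" by (simp add: vhat_def ys)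
          have pq: "p * q = a * F / \<theta> - a" using pa by (simp add: q_def field_simps)
          have aF: "a * F / \<theta> = F * k * G1 * G2 / u"
            using pa G1p G2p by (simp add: \<theta>_def field_simps)
          have "(a * \<phi>1 s + p * \<phi>1 s * \<phi>2 z) / G1 = \<phi>1 s * (a + p * q) / G1"
            using z(2) by (simp add: algebra_simps)
          also have "\<dots> = \<phi>1 s * (F * k * G1 * G2 / u) / G1" using pq aF by simp
          also have "\<dots> = F * vhat" using G1p by (simp add: vh field_simps)
          finally show ?thesis by (simp add: F_def)
        qed
        show "k * G2 * \<phi>1 s = u * vhat" using pa by (simp add: vhat_def ys)
        show "c * G3 * \<phi>1 s * \<phi>2 z = b * \<phi>2 z" using s(2) pa G3_pos by simp
      qed (use xh sp vhp z in auto)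
      then show ?thesis using xh sp vhp zp by blast
    qed
    show "let yhat = the_inv_into {0..} \<phi>1 (b / (c * G3));
                 vhat = k * G2 * \<phi>1 yhat / u;
                 R0 = Rnum f k a u G1 G2 xbar 0 0;
                 R1 = Rnum f k a u G1 G2 xhat yhat vhat
             in (0 < xhat \<and> xhat < xbar \<and> n xhat - f xhat yhat vhat * vhat = 0) \<longrightarrow>
       ((R1 \<le> 1 \<and> 1 < R0 \<longrightarrow>
           equilibrium n f \<phi>1 \<phi>2 a p k u c b G1 G2 G3 xbar 0 0 0 \<and>
           (\<exists>x1 y1 v1. x1 > 0 \<and> y1 > 0 \<and> v1 > 0 \<and>
              equilibrium n f \<phi>1 \<phi>2 a p k u c b G1 G2 G3 x1 y1 v1 0)) \<and>
        (R0 > R1 \<and> R1 > 1 \<longrightarrow>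
           equilibrium n f \<phi>1 \<phi>2 a p k u c b G1 G2 G3 xbar 0 0 0 \<and>
           (\<exists>x1 y1 v1. x1 > 0 \<and> y1 > 0 \<and> v1 > 0 \<and>
              equilibrium n f \<phi>1 \<phi>2 a p k u c b G1 G2 G3 x1 y1 v1 0) \<and>
           (\<exists>x2 y2 v2 z2. x2 > 0 \<and> y2 > 0 \<and> v2 > 0 \<and> z2 > 0 \<and>
              equilibrium n f \<phi>1 \<phi>2 a p k u c b G1 G2 G3 x2 y2 v2 z2)))"
      unfolding Let_def yhat_def[symmetric] vhat_def[symmetric]
    proof (intro impI conjI)
      assume h: "0 < xhat \<and> xhat < xbar \<and> n xhat - f xhat yhat vhat * vhat = 0"
      show "equilibrium n f \<phi>1 \<phi>2 a p k u c b G1 G2 G3 xbar 0 0 0" by (rule E0)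
      show "equilibrium n f \<phi>1 \<phi>2 a p k u c b G1 G2 G3 xbar 0 0 0" by (rule E0)
      {
        assume "Rnum f k a u G1 G2 xhat yhat vhat \<le> 1 \<and> 1 < Rnum f k a u G1 G2 xbar 0 0"
        then show "\<exists>x1 y1 v1. x1 > 0 \<and> y1 > 0 \<and> v1 > 0 \<and>
              equilibrium n f \<phi>1 \<phi>2 a p k u c b G1 G2 G3 x1 y1 v1 0"
          using E1 Rgt by blast
      }
      {
        assume "Rnum f k a u G1 G2 xbar 0 0 > Rnum f k a u G1 G2 xhat yhat vhat \<and>
                Rnum f k a u G1 G2 xhat yhat vhat > 1"
        then show "\<exists>x1 y1 v1. x1 > 0 \<and> y1 > 0 \<and> v1 > 0 \<and>
              equilibrium n f \<phi>1 \<phi>2 a p k u c b G1 G2 G3 x1 y1 v1 0"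
          using E1 Rgt by (meson less_trans)
      }
      {
        assume "Rnum f k a u G1 G2 xbar 0 0 > Rnum f k a u G1 G2 xhat yhat vhat \<and>
                Rnum f k a u G1 G2 xhat yhat vhat > 1"
        then show "\<exists>x2 y2 v2 z2. x2 > 0 \<and> y2 > 0 \<and> v2 > 0 \<and> z2 > 0 \<and>
              equilibrium n f \<phi>1 \<phi>2 a p k u c b G1 G2 G3 x2 y2 v2 z2"
          using E2 h Rgt by blast
      }
    qed
  qed
qed

end
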